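(* Let $f$ be any function of unitation on $\{0,1\}^n$. Consider the $(\mu+1)$ EA with phenotypic clearing with clearing radius $\sigma=1$, niche capacity $\kappa\in\mathbb{N}$ and population size $\mu\geq (n+1)\cdot\kappa$ on $f$. Then winners are never removed from the population, i.e., if $x\in P_t$ is a winner then $x\in P_{t+1}$.
   Context: A function of unitation is $f:\{0,1\}^n\to\mathbb{R}$ with $f(x)=u(|x|_1)$ for some $u:\{0,\dots,n\}\to\mathbb{R}^+$, where $|x|_1$ is the number of 1-bits of $x$; fitness values are assumed positive. The $(\mu+1)$ EA with clearing (population size $\mu$, clearing radius $\sigma$, niche capacity $\kappa$, distance function $\mathrm{d}$): $P_0$ consists of $\mu$ bit strings chosen independently and uniformly at random. In generation $t$: choose a parent $x\in P_t$ uniformly at random; create $y$ by flipping each bit of $x$ independently with probability $1/n$; let $P_t^*=P_t\cup\{y\}$; update the fitness values of $P_t^*$ by the clearing procedure: sort $P_t^*$ by decreasing fitness; for $i=1,\dots,|P_t^*|$, if the current fitness of $P[i]$ is positive, set $w:=1$ and for $j=i+1,\dots,|P_t^*|$: if the current fitness of $P[j]$ is positive and $\mathrm{d}(P[i],P[j])<\sigma$ then, if $w<\kappa$ set $w:=w+1$, else set the fitness of $P[j]$ to $0$. Individuals whose fitness is not reset to $0$ are winners, the others are cleared. Then choose $z\in P_t$ with worst (cleared) fitness uniformly at random; if the (cleared) fitness of $y$ is at least that of $z$, set $P_{t+1}=P_t^*\setminus\{z\}$, otherwise $P_{t+1}=P_t^*\setminus\{y\}$. Phenotypic clearing uses $\mathrm{d}(x,y)=\big||x|_1-|y|_1\big|$.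 *)

theory Defs
  imports Main "HOL.Real"
begin

(* Bit strings are bool lists (of length n); True = 1-bit. *)
definition unitation :: "bool list \<Rightarrow> nat" where
  "unitation x = count_list x True"

definition pheno_dist :: "bool list \<Rightarrow> bool list \<Rightarrow> real" where
  "pheno_dist x y = \<bar>real (unitation x) - real (unitation y)\<bar>"

(* One step of the inner loop of clearing: individual a (index into Q) is the
   current niche representative, b the next individual in sorted order;
   state (w, cf) = (winner counter, current fitness of all indices). *)
definition clear_inner ::
  "('a \<Rightarrow> 'a \<Rightarrow> real) \<Rightarrow> real \<Rightarrow> nat \<Rightarrow> 'a list \<Rightarrow> nat
     \<Rightarrow> nat \<Rightarrow> nat \<times> (nat \<Rightarrow> real) \<Rightarrow> nat \<times> (nat \<Rightarrow> real)" where
  "clear_inner d \<sigma> \<kappa> Q a b s =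
     (case s of (w, cf) \<Rightarrow>
       if cf b > 0 \<and> d (Q ! a) (Q ! b) < \<sigma>
       then (if w < \<kappa> then (w + 1, cf) else (w, cf(b := 0)))
       else (w, cf))"

fun clearing_loop ::
  "('a \<Rightarrow> 'a \<Rightarrow> real) \<Rightarrow> real \<Rightarrow> nat \<Rightarrow> 'a list \<Rightarrow> nat list
     \<Rightarrow> (nat \<Rightarrow> real) \<Rightarrow> (nat \<Rightarrow> real)" where
  "clearing_loop d \<sigma> \<kappa> Q [] cf = cf"
| "clearing_loop d \<sigma> \<kappa> Q (a # rest) cf =
     clearing_loop d \<sigma> \<kappa> Q rest
       (if cf a > 0 then snd (fold (clear_inner d \<sigma> \<kappa> Q a) rest (1, cf)) else cf)"

definition cleared_fitness ::
  "('a \<Rightarrow> real) \<Rightarrow> ('a \<Rightarrow> 'a \<Rightarrow> real) \<Rightarrow> real \<Rightarrow> nat \<Rightarrow> 'a list \<Rightarrow> nat list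
     \<Rightarrow> nat \<Rightarrow> real" where
  "cleared_fitness f d \<sigma> \<kappa> Q ord = clearing_loop d \<sigma> \<kappa> Q ord (\<lambda>i. f (Q ! i))"

definition valid_sort :: "('a \<Rightarrow> real) \<Rightarrow> 'a list \<Rightarrow> nat list \<Rightarrow> bool" where
  "valid_sort f Q ord \<longleftrightarrow> distinct ord \<and> set ord = {..<length Q}
     \<and> sorted_wrt (\<lambda>i j. f (Q ! i) \<ge> f (Q ! j)) ord"

definition winner ::
  "('a \<Rightarrow> real) \<Rightarrow> ('a \<Rightarrow> 'a \<Rightarrow> real) \<Rightarrow> real \<Rightarrow> nat \<Rightarrow> 'a list \<Rightarrow> nat list
     \<Rightarrow> nat \<Rightarrow> bool" where
  "winner f d \<sigma> \<kappa> Q ord i \<longleftrightarrow> cleared_fitness f d \<sigma> \<kappa> Q ord i \<noteq> 0"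

(* Index (into P_t^* = P @ [y], y has index length P) of the individual removed,
   given the cleared fitness cf and the chosen worst individual zi of P_t. *)
definition removed_index :: "nat \<Rightarrow> (nat \<Rightarrow> real) \<Rightarrow> nat \<Rightarrow> nat" where
  "removed_index \<mu> cf zi = (if cf \<mu> \<ge> cf zi then zi else \<mu>)"

end

theory Submission
  imports Defs
begin

lemma fold_unch:
  "j \<notin> set L \<Longrightarrow> snd (fold (clear_inner d \<sigma> \<kappa> Q a) L (w, cf)) j = cf j"
proof (induction L arbitrary: w cf)
  case Nil thus ?case by simp
next
  case (Cons b L)
  show ?case using Cons by (auto simp: clear_inner_def)
qed

lemma step_val:
  "snd (clear_inner d \<sigma> \<kappa> Q a b (w, cf)) j = cf j \<or>
   snd (clear_inner d \<sigma> \<kappa> Q a b (w, cf)) j = 0"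
  by (auto simp: clear_inner_def)

lemma fold_val:
  "snd (fold (clear_inner d \<sigma> \<kappa> Q a) L (w, cf)) j = cf j \<or>
   snd (fold (clear_inner d \<sigma> \<kappa> Q a) L (w, cf)) j = 0"
proof (induction L arbitrary: w cf)
  case Nil thus ?case by simp
next
  case (Cons b L)
  obtain w' cf' where st: "clear_inner d \<sigma> \<kappa> Q a b (w, cf) = (w', cf')"
    by (cases "clear_inner d \<sigma> \<kappa> Q a b (w, cf)")
  have e: "snd (fold (clear_inner d \<sigma> \<kappa> Q a) (b#L) (w, cf)) j =
           snd (fold (clear_inner d \<sigma> \<kappa> Q a) L (w', cf')) j"
    by (simp only: fold_Cons comp_def st)
  show ?case unfolding e using Cons.IH[of w' cf'] step_val[of d \<sigma> \<kappa> Q a b w cf j] st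
    by auto
qed

lemma fold_count:
  assumes "distinct L" "w \<le> \<kappa>"
    and cls: "\<And>x z. d x z < \<sigma> \<longleftrightarrow> g x = g z"
  shows "w + card {b \<in> set L. g (Q ! b) = g (Q ! a) \<and>
           snd (fold (clear_inner d \<sigma> \<kappa> Q a) L (w, cf)) b > 0} \<le> \<kappa>"
  using assms(1,2)
proof (induction L arbitrary: w cf)
  case Nil thus ?case by simp
next
  case (Cons b L)
  let ?F = "\<lambda>w cf. snd (fold (clear_inner d \<sigma> \<kappa> Q a) L (w, cf))"
  let ?S = "\<lambda>w cf. {c \<in> set L. g (Q ! c) = g (Q ! a) \<and> ?F w cf c > 0}"
  have bL: "b \<notin> set L" "distinct L" using Cons.prems by auto
  show ?case
  proof (cases "cf b > 0 \<and> d (Q ! a) (Q ! b) < \<sigma>")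
    case T: True
    show ?thesis
    proof (cases "w < \<kappa>")
      case True
      have st: "clear_inner d \<sigma> \<kappa> Q a b (w, cf) = (w+1, cf)"
        using T True by (simp add: clear_inner_def)
      have fb: "?F (w+1) cf b = cf b" by (rule fold_unch[OF bL(1)])
      have "{c \<in> set (b # L). g (Q ! c) = g (Q ! a) \<and> ?F (w+1) cf c > 0}
            = insert b (?S (w+1) cf)"
        using fb T cls by auto
      moreover have "card (insert b (?S (w+1) cf)) = Suc (card (?S (w+1) cf))"
        using bL by simp
      moreover have "w + 1 + card (?S (w+1) cf) \<le> \<kappa>"
        using Cons.IH[OF bL(2), of "w+1" cf] True by simp
      ultimately show ?thesis using st by simp
    next
      case False
      have st: "clear_inner d \<sigma> \<kappa> Q a b (w, cf) = (w, cf(b:=0))"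
        using T False by (simp add: clear_inner_def)
      have fb: "?F w (cf(b:=0)) b = 0" using fold_unch[OF bL(1), where w=w and cf="cf(b:=0)"] by simp
      have "{c \<in> set (b # L). g (Q ! c) = g (Q ! a) \<and> ?F w (cf(b:=0)) c > 0}
            = ?S w (cf(b:=0))"
        using fb by auto
      moreover have "w + card (?S w (cf(b:=0))) \<le> \<kappa>"
        using Cons.IH[OF bL(2)] Cons.prems by simp
      ultimately show ?thesis using st by simp
    qed
  next
    case F: False
    have st: "clear_inner d \<sigma> \<kappa> Q a b (w, cf) = (w, cf)"
      using F unfolding clear_inner_def by auto
    have fb: "?F w cf b = cf b" by (rule fold_unch[OF bL(1)])
    have "{c \<in> set (b # L). g (Q ! c) = g (Q ! a) \<and> ?F w cf c > 0}
          = ?S w cf"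
      using fb F cls by auto
    moreover have "w + card (?S w cf) \<le> \<kappa>"
      using Cons.IH[OF bL(2)] Cons.prems by simp
    ultimately show ?thesis using st by simp
  qed
qed

lemma loop_unch:
  "j \<notin> set L \<Longrightarrow> clearing_loop d \<sigma> \<kappa> Q L cf j = cf j"
proof (induction L arbitrary: cf)
  case Nil thus ?case by simp
next
  case (Cons a L)
  thus ?case using fold_unch[of j L] by auto
qed

lemma loop_val:
  "clearing_loop d \<sigma> \<kappa> Q L cf j = cf j \<or> clearing_loop d \<sigma> \<kappa> Q L cf j = 0"
proof (induction L arbitrary: cf)
  case Nil thus ?case by simp
next
  case (Cons a L)
  show ?case
  proof (cases "cf a > 0")
    case True
    then show ?thesis using Cons.IH[of "snd (fold (clear_inner d \<sigma> \<kappa> Q a) L (1, cf))"]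
      fold_val[of d \<sigma> \<kappa> Q a L 1 cf j] by auto
  next
    case False
    then show ?thesis using Cons.IH[of cf] by auto
  qed
qed

lemma loop_pos: "clearing_loop d \<sigma> \<kappa> Q L cf j > 0 \<Longrightarrow> cf j > 0"
  using loop_val[of d \<sigma> \<kappa> Q L cf j] by auto

lemma loop_count:
  assumes "distinct L" "1 \<le> \<kappa>"
    and cls: "\<And>x z. d x z < \<sigma> \<longleftrightarrow> g x = g z"
  shows "card {j \<in> set L. g (Q ! j) = k \<and> clearing_loop d \<sigma> \<kappa> Q L cf j > 0} \<le> \<kappa>"
  using assms(1)
proof (induction L arbitrary: cf)
  case Nil thus ?case by simp
next
  case (Cons a L)
  have aL: "a \<notin> set L" "distinct L" using Cons.prems by auto
  let ?C = "\<lambda>cf. {j \<in> set L. g (Q ! j) = k \<and> clearing_loop d \<sigma> \<kappa> Q L cf j > 0}"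
  show ?case
  proof (cases "cf a > 0")
    case False
    have "clearing_loop d \<sigma> \<kappa> Q L cf a = cf a" using loop_unch[OF aL(1)] .
    hence "{j \<in> set (a # L). g (Q ! j) = k \<and> clearing_loop d \<sigma> \<kappa> Q (a#L) cf j > 0} = ?C cf"
      using False by auto
    thus ?thesis using Cons.IH[OF aL(2)] by simp
  next
    case True
    define cf' where "cf' = snd (fold (clear_inner d \<sigma> \<kappa> Q a) L (1, cf))"
    have eq: "clearing_loop d \<sigma> \<kappa> Q (a#L) cf = clearing_loop d \<sigma> \<kappa> Q L cf'"
      using True cf'_def by simp
    show ?thesis
    proof (cases "g (Q ! a) = k")
      case False
      have "{j \<in> set (a # L). g (Q ! j) = k \<and> clearing_loop d \<sigma> \<kappa> Q (a#L) cf j > 0} = ?C cf'"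
        using False eq by auto
      thus ?thesis using Cons.IH[OF aL(2)] by simp
    next
      case gk: True
      have sub: "?C cf' \<subseteq> {b \<in> set L. g (Q ! b) = g (Q ! a) \<and> cf' b > 0}"
        using gk by (auto dest: loop_pos)
      have c1: "1 + card {b \<in> set L. g (Q ! b) = g (Q ! a) \<and> cf' b > 0} \<le> \<kappa>"
        unfolding cf'_def using fold_count[where d=d and \<sigma>=\<sigma> and g=g and Q=Q and a=a and cf=cf, OF aL(2) assms(2) cls] by blast
      have c2: "card (?C cf') \<le> card {b \<in> set L. g (Q ! b) = g (Q ! a) \<and> cf' b > 0}"
        by (rule card_mono[OF _ sub]) simp
      have "{j \<in> set (a # L). g (Q ! j) = k \<and> clearing_loop d \<sigma> \<kappa> Q (a#L) cf j > 0}
            \<subseteq> insert a (?C cf')" using eq by auto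
      hence "card {j \<in> set (a # L). g (Q ! j) = k \<and> clearing_loop d \<sigma> \<kappa> Q (a#L) cf j > 0}
            \<le> card (insert a (?C cf'))" by (intro card_mono) auto
      also have "\<dots> \<le> Suc (card (?C cf'))" by (simp add: card_insert_le_m1)
      finally show ?thesis using c1 c2 by simp
    qed
  qed
qed

lemma pheno_cls: "pheno_dist x z < 1 \<longleftrightarrow> unitation x = unitation z"
  unfolding pheno_dist_def by linarith

theorem lemma1:
  fixes n \<mu> \<kappa> :: nat
    and u :: "nat \<Rightarrow> real"
    and P :: "bool list list"
    and y :: "bool list"
    and ord :: "nat list"
    and zi i :: nat
  defines "f \<equiv> \<lambda>x. u (unitation x)"
  defines "Q \<equiv> P @ [y]"
  defines "cf \<equiv> cleared_fitness f pheno_dist 1 \<kappa> Q ord"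
  assumes u_pos: "\<And>k. k \<le> n \<Longrightarrow> u k > 0"
    and kappa: "\<kappa> \<ge> 1"
    and mu: "\<mu> \<ge> (n + 1) * \<kappa>"
    and P_len: "length P = \<mu>"
    and P_bits: "\<forall>x \<in> set P. length x = n"
    and y_bits: "length y = n"
    and sort: "valid_sort f Q ord"
    and z_worst: "zi < \<mu>" "\<forall>j < \<mu>. cf zi \<le> cf j"
    and i_in: "i < \<mu>"
    and i_win: "winner f pheno_dist 1 \<kappa> Q ord i"
  shows "removed_index \<mu> cf zi \<noteq> i"
proof
  assume rm: "removed_index \<mu> cf zi = i"
  have zii: "zi = i" and ge: "cf \<mu> \<ge> cf zi"
    using rm i_in unfolding removed_index_def by (auto split: if_splits)
  have lenQ: "length Q = Suc \<mu>" using P_len Q_def by simp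
  have bits: "\<And>j. j < Suc \<mu> \<Longrightarrow> unitation (Q ! j) \<le> n"
  proof -
    fix j assume "j < Suc \<mu>"
    hence "Q ! j \<in> set Q" using lenQ by simp
    hence "length (Q ! j) = n" using P_bits y_bits Q_def by auto
    thus "unitation (Q ! j) \<le> n" unfolding unitation_def by (metis count_le_length)
  qed
  have cfv: "cf j = f (Q ! j) \<or> cf j = 0" for j
    unfolding cf_def cleared_fitness_def using loop_val[of pheno_dist 1 \<kappa> Q ord "\<lambda>i. f (Q ! i)" j] by simp
  have ipos: "cf i > 0"
  proof -
    have "cf i \<noteq> 0" using i_win unfolding winner_def cf_def by simp
    hence "cf i = f (Q ! i)" using cfv by blast
    thus ?thesis using u_pos bits[of i] i_in f_def by simp
  qed
  have allpos: "cf j > 0" if "j < Suc \<mu>" for j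
  proof (cases "j = \<mu>")
    case True thus ?thesis using ge zii ipos by simp
  next
    case False thus ?thesis using that z_worst(2) zii ipos
      by (metis less_Suc_eq order_less_le_trans)
  qed
  have dist: "distinct ord" and setord: "set ord = {..<Suc \<mu>}"
    using sort lenQ unfolding valid_sort_def by auto
  have "{..<Suc \<mu>} \<subseteq> (\<Union>k\<in>{..n}. {j \<in> set ord. unitation (Q ! j) = k \<and> cf j > 0})"
    using allpos bits setord by auto
  hence "card {..<Suc \<mu>} \<le> card (\<Union>k\<in>{..n}. {j \<in> set ord. unitation (Q ! j) = k \<and> cf j > 0})"
    by (intro card_mono) auto
  also have "\<dots> \<le> (\<Sum>k\<in>{..n}. card {j \<in> set ord. unitation (Q ! j) = k \<and> cf j > 0})"
    by (rule card_UN_le) simp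
  also have "\<dots> \<le> (\<Sum>k\<in>{..n}. \<kappa>)"
    apply (rule sum_mono)
    unfolding cf_def cleared_fitness_def
    by (rule loop_count[OF dist kappa pheno_cls])
  also have "\<dots> = (n + 1) * \<kappa>" by simp
  finally show False using mu by simp
qed

end
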